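(* Let $X$ be a random variable with mean $\mu$ whose moment generating function $\mathbb{E}[e^{tX}]$ exists (is finite) for every real $t$. For $n\ge1$ let $\overline X_n=\frac1n\sum_{i=1}^nX_i$, where $X_1,\dots,X_n$ are i.i.d. copies of $X$. Fix $\varepsilon>0$ and set $$\mathcal F(\mu-\varepsilon,\mu)=\inf_{t<0}\mathbb{E}\big[e^{t(X-\mu+\varepsilon)}\big],\qquad \mathcal G(\mu+\varepsilon,\mu)=\inf_{t>0}\mathbb{E}\big[e^{t(X-\mu-\varepsilon)}\big].$$ For $\delta>0$ define $$N_{\mathrm c}(\delta)=\max\left\{\frac{\ln\frac\delta2}{\ln\mathcal F(\mu-\varepsilon,\mu)},\ \frac{\ln\frac\delta2}{\ln\mathcal G(\mu+\varepsilon,\mu)}\right\},$$ and let $N_{\mathrm a}(\delta)$ be the minimum sample size $n$ guaranteeing $\Pr\{|\overline X_n-\mu|<\varepsilon\}>1-\delta$. Then $$\lim_{\delta\to0}\frac{N_{\mathrm c}(\delta)}{N_{\mathrm a}(\delta)}=1.$$ *)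

theory Defs
  imports "HOL-Probability.Probability"
begin

definition sample_mean :: "(nat \<Rightarrow> 'a \<Rightarrow> real) \<Rightarrow> nat \<Rightarrow> 'a \<Rightarrow> real" where
  "sample_mean X n \<omega> = (\<Sum>i<n. X i \<omega>) / real n"

definition chernoff_F :: "'a measure \<Rightarrow> ('a \<Rightarrow> real) \<Rightarrow> real \<Rightarrow> real \<Rightarrow> real" where
  "chernoff_F M Y \<mu> \<epsilon> = (INF t\<in>{..<0::real}. integral\<^sup>L M (\<lambda>\<omega>. exp (t * (Y \<omega> - \<mu> + \<epsilon>))))"

definition chernoff_G :: "'a measure \<Rightarrow> ('a \<Rightarrow> real) \<Rightarrow> real \<Rightarrow> real \<Rightarrow> real" where
  "chernoff_G M Y \<mu> \<epsilon> = (INF t\<in>{0::real<..}. integral\<^sup>L M (\<lambda>\<omega>. exp (t * (Y \<omega> - \<mu> - \<epsilon>))))"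

definition N_c :: "'a measure \<Rightarrow> ('a \<Rightarrow> real) \<Rightarrow> real \<Rightarrow> real \<Rightarrow> real \<Rightarrow> real" where
  "N_c M Y \<mu> \<epsilon> \<delta> = max (ln (\<delta> / 2) / ln (chernoff_F M Y \<mu> \<epsilon>))
                            (ln (\<delta> / 2) / ln (chernoff_G M Y \<mu> \<epsilon>))"

definition N_a :: "'a measure \<Rightarrow> (nat \<Rightarrow> 'a \<Rightarrow> real) \<Rightarrow> real \<Rightarrow> real \<Rightarrow> real \<Rightarrow> nat" where
  "N_a M X \<mu> \<epsilon> \<delta> = (LEAST n::nat. n \<ge> 1 \<and>
     measure M {\<omega> \<in> space M. \<bar>sample_mean X n \<omega> - \<mu>\<bar> < \<epsilon>} > 1 - \<delta>)"

end

theory Submission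
  imports Defs
begin

lemma La: "exp x - 1 \<le> x * exp (x::real)"
proof -
  have "1 + (-x) \<le> exp (-x)" by (rule exp_ge_add_one_self)
  hence "(1 - x) * exp x \<le> exp (-x) * exp x" by (intro mult_right_mono) auto
  thus ?thesis by (simp add: exp_minus field_simps)
qed

lemma Lb: "exp x \<le> 1 + x + x^2 * (exp x + 1)" for x :: real
proof -
  define E where "E = exp x"
  have E0: "E > 0" unfolding E_def by simp
  have h1: "E - 1 \<le> x * E" unfolding E_def by (rule La)
  have h0: "1 + x \<le> E" unfolding E_def by (rule exp_ge_add_one_self)
  have sq: "x^2 * (E + 1) = x*x*E + x*x" by (simp add: power2_eq_square algebra_simps)
  have xx: "0 \<le> x*x" by simp
  show ?thesis
  proof (cases "x \<ge> 0")
    case True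
    have "x * (E - 1) \<le> x * (x * E)" using h1 True by (intro mult_left_mono) auto
    hence "x*E - x \<le> x*x*E" by (simp add: algebra_simps)
    thus ?thesis unfolding E_def[symmetric] sq using h1 xx by linarith
  next
    case False
    have "x * (E - 1) \<le> x * x" using h0 False by (intro mult_left_mono_neg) auto
    hence "x*E - x \<le> x*x" by (simp add: algebra_simps)
    moreover have "0 \<le> x*x*E" using xx E0 by simp
    ultimately show ?thesis unfolding E_def[symmetric] sq using h1 by linarith
  qed
qed
lemma Lc: "y^2 \<le> 2 * exp \<bar>y\<bar>" for y :: real
proof -
  have "1 + \<bar>y\<bar> + \<bar>y\<bar>^2 / 2 \<le> exp \<bar>y\<bar>" by (rule exp_lower_Taylor_quadratic) simp
  thus ?thesis by simp
qed

lemma Ld: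
  fixes t y :: real
  assumes "\<bar>t\<bar> \<le> 1"
  shows "exp (t*y) \<le> 1 + t*y + 4*t^2*(exp(2*y) + exp(-2*y))"
proof -
  have a: "exp (t*y) \<le> exp \<bar>y\<bar>"
  proof -
    have "t * y \<le> \<bar>t*y\<bar>" by simp
    also have "\<dots> \<le> \<bar>y\<bar>" using assms by (simp add: abs_mult mult_left_le_one_le)
    finally show ?thesis by simp
  qed
  have b: "exp \<bar>y\<bar> * exp \<bar>y\<bar> \<le> exp(2*y) + exp(-2*y)"
  proof -
    have "exp \<bar>y\<bar> * exp \<bar>y\<bar> = exp (2*\<bar>y\<bar>)" by (simp add: exp_add[symmetric])
    also have "\<dots> \<le> exp(2*y) + exp(-2*y)" by (cases "y \<ge> 0") (auto simp: add_increasing2 add_increasing)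
    finally show ?thesis .
  qed
  have one: "1 \<le> exp \<bar>y\<bar>" by simp
  have "exp (t*y) \<le> 1 + t*y + (t*y)^2 * (exp (t*y) + 1)" by (rule Lb)
  also have "(t*y)^2 * (exp (t*y) + 1) \<le> t^2 * (2 * exp \<bar>y\<bar>) * (2 * exp \<bar>y\<bar>)"
  proof -
    have "(t*y)^2 = t^2 * y^2" by (simp add: power_mult_distrib)
    also have "\<dots> \<le> t^2 * (2 * exp \<bar>y\<bar>)" by (intro mult_left_mono Lc) auto
    finally have 1: "(t*y)^2 \<le> t^2 * (2 * exp \<bar>y\<bar>)" .
    have 2: "exp (t*y) + 1 \<le> 2 * exp \<bar>y\<bar>" using a one by linarith
    show ?thesis by (rule mult_mono[OF 1 2]) auto
  qed
  also have "t^2 * (2 * exp \<bar>y\<bar>) * (2 * exp \<bar>y\<bar>) = 4 * t^2 * (exp \<bar>y\<bar> * exp \<bar>y\<bar>)" by simp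
  also have "\<dots> \<le> 4 * t^2 * (exp(2*y) + exp(-2*y))" by (intro mult_left_mono b) auto
  finally show ?thesis by simp
qed


lemma Lind:
  fixes s u h K x :: real
  assumes "s \<ge> 0" "u \<ge> 0" "h \<ge> 0" "K \<ge> 0"
  shows "exp(-s*K) * (exp(s*x) - exp((s-u)*x) - exp((s+h)*x - h*K)) \<le> (if x \<ge> 0 then 1 else 0)"
proof -
  have p1: "exp(-s*K) > 0" "exp((s-u)*x) > 0" "exp((s+h)*x - h*K) > 0" by auto
  show ?thesis
  proof (cases "x < 0")
    case True
    have "s*x \<le> (s-u)*x" using True assms by (simp add: algebra_simps mult_nonneg_nonpos)
    hence "exp (s*x) \<le> exp ((s-u)*x)" by simp
    hence "exp(s*x) - exp((s-u)*x) - exp((s+h)*x - h*K) \<le> 0" using p1 by linarith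
    hence "exp(-s*K) * (exp(s*x) - exp((s-u)*x) - exp((s+h)*x - h*K)) \<le> 0" using p1 by (simp add: mult_nonneg_nonpos)
    thus ?thesis using True by simp
  next
    case False
    show ?thesis
    proof (cases "x \<le> K")
      case True
      have "exp(-s*K) * (exp(s*x) - exp((s-u)*x) - exp((s+h)*x - h*K)) \<le> exp(-s*K) * exp(s*x)"
        using p1 by (intro mult_left_mono) (linarith, simp)
      also have "\<dots> = exp (s*(x-K))" by (simp add: exp_add[symmetric] algebra_simps)
      also have "\<dots> \<le> 1" using True assms by (simp add: mult_nonneg_nonpos)
      finally show ?thesis using False by simp
    next
      case F2: False
      have "h*K \<le> h*x" using F2 assms by (intro mult_left_mono) auto
      hence "s*x \<le> (s+h)*x - h*K" by (simp add: algebra_simps)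
      hence "exp (s*x) \<le> exp ((s+h)*x - h*K)" by simp
      hence "exp(s*x) - exp((s-u)*x) - exp((s+h)*x - h*K) \<le> 0" using p1 by linarith
      hence "exp(-s*K) * (exp(s*x) - exp((s-u)*x) - exp((s+h)*x - h*K)) \<le> 0" using p1 by (simp add: mult_nonneg_nonpos)
      thus ?thesis using False by simp
    qed
  qed
qed



lemma Le:
  fixes s h y :: real
  assumes "\<bar>h\<bar> \<le> 1"
  shows "exp((s+h)*y) + exp((s-h)*y) \<le> 2*exp(s*y) + 8*h^2*(exp((s+2)*y) + exp((s-2)*y))"
proof -
  have 1: "exp(h*y) \<le> 1 + h*y + 4*h^2*(exp(2*y) + exp(-2*y))" using Ld assms by blast
  have 2: "exp((-h)*y) \<le> 1 + (-h)*y + 4*(-h)^2*(exp(2*y) + exp(-2*y))" using Ld[of "-h" y] assms by simp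
  have "exp(h*y) + exp((-h)*y) \<le> 2 + 8*h^2*(exp(2*y) + exp(-2*y))" using 1 2 by simp
  hence G: "exp(s*y) * (exp(h*y) + exp((-h)*y)) \<le> exp(s*y) * (2 + 8*h^2*(exp(2*y) + exp(-2*y)))"
    by (intro mult_left_mono) auto
  have e: "exp(s*y)*exp(h*y) = exp((s+h)*y)" "exp(s*y)*exp((-h)*y) = exp((s-h)*y)"
     "exp(s*y)*exp(2*y) = exp((s+2)*y)" "exp(s*y)*exp(-2*y) = exp((s-2)*y)"
    by (simp_all add: exp_add[symmetric] algebra_simps)
  define a p q r w where "a = exp(s*y)" "p = exp(h*y)" "q = exp((-h)*y)" "r = exp(2*y)" "w = exp(-2*y)"
  have "a*p + a*q \<le> 2*a + 8*h^2*(a*r + a*w)" using G unfolding a_p_q_r_w_def[symmetric] by (simp add: algebra_simps)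
  thus ?thesis using e unfolding a_p_q_r_w_def by simp
qed

lemma asym:
  fixes A B D q r :: real
  assumes "0 \<le> B" "B < A" "0 \<le> D" "D < A" "0 < r" "r < A*q" "q > 0"
  shows "eventually (\<lambda>n. r^n \<le> q^n*(A^n - B^n - D^n)) sequentially"
proof -
  have A0: "A > 0" using assms by linarith
  have "(\<lambda>n. (B/A)^n) \<longlonglongrightarrow> 0" using assms A0 by (intro LIMSEQ_power_zero) auto
  hence e1: "eventually (\<lambda>n. (B/A)^n < 1/4) sequentially" by (rule order_tendstoD) simp
  have "(\<lambda>n. (D/A)^n) \<longlonglongrightarrow> 0" using assms A0 by (intro LIMSEQ_power_zero) auto
  hence e2: "eventually (\<lambda>n. (D/A)^n < 1/4) sequentially" by (rule order_tendstoD) simp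
  have "(\<lambda>n. (r/(A*q))^n) \<longlonglongrightarrow> 0" using assms A0 by (intro LIMSEQ_power_zero) (auto simp: divide_simps)
  hence e3: "eventually (\<lambda>n. (r/(A*q))^n < 1/4) sequentially" by (rule order_tendstoD) simp
  show ?thesis using e1 e2 e3
  proof eventually_elim
    case (elim n)
    have Aq: "(A*q)^n > 0" using A0 assms by simp
    have "B^n = A^n * (B/A)^n" using A0 by (simp add: power_divide)
    moreover have "D^n = A^n * (D/A)^n" using A0 by (simp add: power_divide)
    moreover have "r^n = (A*q)^n * (r/(A*q))^n" using A0 assms by (simp add: power_divide)
    ultimately have "q^n*(A^n - B^n - D^n) - r^n = (A*q)^n * (1 - (B/A)^n - (D/A)^n - (r/(A*q))^n)"
      by (simp add: algebra_simps power_mult_distrib)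
    also have "\<dots> \<ge> 0" using elim Aq by (intro mult_nonneg_nonneg) auto
    finally show ?case by simp
  qed
qed

lemma largest_min:
  fixes f :: "real \<Rightarrow> real"
  assumes cont: "continuous_on UNIV f" and T: "T > 0"
    and neg: "\<And>t. t \<le> 0 \<Longrightarrow> f t \<ge> f 0" and big: "\<And>t. t \<ge> T \<Longrightarrow> f t > f 0"
  shows "\<exists>s\<ge>0. (\<forall>t. f s \<le> f t) \<and> (\<forall>t>s. f t > f s)"
proof -
  have cT: "continuous_on {0..T} f" using cont by (rule continuous_on_subset) simp
  have "\<exists>x\<in>{0..T}. \<forall>y\<in>{0..T}. f x \<le> f y"
  proof (rule continuous_attains_inf)
    show "compact {0..T}" by simp
    show "{0..T} \<noteq> {}" using T by simp
  qed (rule cT)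
  then obtain m where m: "m \<in> {0..T}" "\<And>t. t \<in> {0..T} \<Longrightarrow> f m \<le> f t" by blast
  have glob: "f m \<le> f t" for t
  proof -
    have m0: "f m \<le> f 0" using m(2)[of 0] T by auto
    show ?thesis
    proof (cases "t \<le> 0")
      case True then show ?thesis using neg[of t] m0 by linarith
    next
      case False
      show ?thesis
      proof (cases "t \<ge> T")
        case True then show ?thesis using big[of t] m0 by linarith
      next
        case F2: False
        hence "t \<in> {0..T}" using False by auto
        thus ?thesis using m(2) by blast
      qed
    qed
  qed
  define K where "K = {t \<in> {0..T}. f t = f m}"
  have "closed K" unfolding K_def
    by (rule continuous_closed_preimage_constant[OF cT]) simp
  moreover have "bounded K" unfolding K_def by (rule bounded_subset[of "{0..T}"]) (simp, blast)
  ultimately have cK: "compact K" by (simp add: compact_eq_bounded_closed)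
  have nK: "K \<noteq> {}" using m unfolding K_def by blast
  obtain s where s: "s \<in> K" "\<And>t. t \<in> K \<Longrightarrow> t \<le> s" using compact_attains_sup[OF cK nK] by blast
  have fs: "f s = f m" "s \<ge> 0" "s \<le> T" using s(1) unfolding K_def by auto
  show ?thesis
  proof (intro exI[of _ s] conjI allI impI)
    show "s \<ge> 0" by (rule fs)
    fix t show "f s \<le> f t" using glob fs by simp
  next
    fix t assume "t > s"
    show "f t > f s"
    proof (cases "t \<le> T")
      case True
      have "t \<notin> K" using s(2)[of t] \<open>t > s\<close> by auto
      hence "f t \<noteq> f m" using True \<open>t > s\<close> fs unfolding K_def by auto
      thus ?thesis using glob[of t] fs by simp
    next
      case False
      have "f m \<le> f 0" using glob by simp
      thus ?thesis using big[of t] False fs by simp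
    qed
  qed
qed

lemma choose:
  fixes f :: "real \<Rightarrow> real"
  assumes pos: "\<And>t. f t > 0" and s0: "s0 \<ge> 0" and minf: "\<And>t. f s0 \<le> f t"
    and strict: "\<And>t. t > s0 \<Longrightarrow> f t > f s0"
    and sd: "\<And>h. \<bar>h\<bar> \<le> 1 \<Longrightarrow> f (s0+h) + f (s0-h) \<le> 2 * f s0 + 8*h^2*(f (s0+2) + f (s0-2))"
    and eta: "\<eta> > 0"
  shows "\<exists>s u h c. s \<ge> 0 \<and> u \<ge> 0 \<and> h \<ge> 0 \<and> c \<ge> 0 \<and> f (s-u) < f s \<and> f (s+h) * exp (-h*c) < f s
           \<and> f s * exp (-s*c) > f s0 - \<eta>"
proof -
  define m where "m = f s0"
  define K0 where "K0 = 8*(f (s0+2) + f (s0-2))"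
  have m0: "m > 0" unfolding m_def by (rule pos)
  have K00: "K0 > 0" unfolding K0_def using pos[of "s0+2"] pos[of "s0-2"] by simp
  define k where "k = min (1/2) (\<eta> / (8*K0*(s0+1)))"
  have k0: "k > 0" unfolding k_def using eta K00 s0 by simp
  have k1: "k \<le> 1/2" unfolding k_def by simp
  have k2: "k \<le> \<eta> / (8*K0*(s0+1))" unfolding k_def by simp
  define c where "c = 4*K0*k/m"
  have c0: "c \<ge> 0" unfolding c_def using K00 k0 m0 by simp
  have mkc: "m*k*c = 4*K0*k^2" unfolding c_def using m0 by (simp add: power2_eq_square)
  have sd2: "f (s0+2*k) + f (s0-2*k) \<le> 2*m + 4*k^2*K0"
  proof -
    have "f (s0+2*k) + f (s0-2*k) \<le> 2 * f s0 + 8*(2*k)^2*(f (s0+2) + f (s0-2))"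
      using sd[of "2*k"] k0 k1 by simp
    thus ?thesis unfolding m_def K0_def by (simp add: power2_eq_square algebra_simps)
  qed
  have "f (s0-2*k) \<ge> m" unfolding m_def by (rule minf)
  hence A: "f (s0+2*k) \<le> m + 4*K0*k^2" using sd2 by (simp add: algebra_simps)
  have "1 + k*c \<le> exp (k*c)" by (rule exp_ge_add_one_self)
  hence "m*(1 + k*c) \<le> m * exp (k*c)" using m0 by (intro mult_left_mono) auto
  hence B: "f (s0+2*k) \<le> m * exp (k*c)" using A mkc by (simp add: algebra_simps)
  have C: "f (s0+2*k) * exp (-k*c) \<le> m"
  proof -
    have "f (s0+2*k) * exp (-k*c) \<le> m * exp (k*c) * exp (-k*c)" using B by (intro mult_right_mono) auto
    also have "\<dots> = m" by (simp add: mult.assoc exp_add[symmetric])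
    finally show ?thesis .
  qed
  have D: "m < f (s0+k)" unfolding m_def using k0 by (intro strict) simp
  have E: "f (s0+k) * exp (-(s0+k)*c) > m - \<eta>"
  proof -
    define ex where "ex = exp (-(s0+k)*c)"
    have ex0: "ex > 0" unfolding ex_def by simp
    have "1 - (s0+k)*c \<le> ex" unfolding ex_def using exp_ge_add_one_self[of "-(s0+k)*c"] by linarith
    hence F1: "m * (1 - (s0+k)*c) \<le> m * ex" using m0 by (intro mult_left_mono) auto
    have F1': "m * (1 - (s0+k)*c) = m - m * (s0+k) * c" by (simp add: algebra_simps)
    have F2: "m * ex \<le> f (s0+k) * ex" using D ex0 by (intro mult_right_mono) auto
    have F3: "m * (s0+k) * c = (s0+k) * (4*K0*k)" unfolding c_def using m0 by simp
    have F4: "(s0+k) * (4*K0*k) \<le> (s0+1) * (4*K0*k)" using k1 k0 K00 by (intro mult_right_mono) auto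
    have F5: "(s0+1) * (4*K0*k) \<le> \<eta>/2"
    proof -
      have "(s0+1) * (4*K0*k) \<le> (s0+1) * (4*K0*(\<eta> / (8*K0*(s0+1))))"
        using k2 K00 s0 by (intro mult_left_mono) auto
      also have "\<dots> = \<eta>/2"
      proof -
        define D where "D = 8*K0*(s0+1)"
        have D0: "D > 0" unfolding D_def using K00 s0 by simp
        have "(s0+1) * (4*K0*(\<eta> / (8*K0*(s0+1)))) = (D/2) * \<eta> / D" unfolding D_def by simp
        also have "\<dots> = \<eta>/2" using D0 by simp
        finally show ?thesis .
      qed
      finally show ?thesis .
    qed
    have "f (s0+k) * ex > m - \<eta>" using F1 F1' F2 F3 F4 F5 eta by linarith
    thus ?thesis unfolding ex_def .
  qed
  have G1: "f (s0 + k - k) < f (s0 + k)" using D unfolding m_def by simp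
  have G2: "f (s0 + k + k) * exp (- k * c) < f (s0 + k)"
  proof -
    have "s0 + k + k = s0 + 2*k" by simp
    hence "f (s0 + k + k) * exp (- k * c) = f (s0 + 2*k) * exp (- k * c)" by (simp only:)
    thus ?thesis using C D by linarith
  qed
  have G3: "f (s0 + k) * exp (- (s0 + k) * c) > f s0 - \<eta>" using E unfolding m_def .
  show ?thesis
    apply (rule exI[of _ "s0+k"], rule exI[of _ k], rule exI[of _ k], rule exI[of _ c])
    using G1 G2 G3 s0 k0 c0 by simp
qed

lemma final_pure:
  fixes Na :: "real \<Rightarrow> nat" and Nc :: "real \<Rightarrow> real" and R :: real
  assumes R: "0 < R" "R < 1"
    and Nc: "\<And>\<delta>. 0 < \<delta> \<Longrightarrow> \<delta> < 1 \<Longrightarrow> Nc \<delta> = ln (\<delta>/2) / ln R"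
    and up: "\<And>\<delta>. 0 < \<delta> \<Longrightarrow> \<delta> < 1 \<Longrightarrow> real (Na \<delta>) \<le> ln (\<delta>/2) / ln R + 1 \<and> Na \<delta> \<ge> 1"
    and low: "\<And>\<eta>. 0 < \<eta> \<Longrightarrow> \<eta> < R \<Longrightarrow> \<exists>\<delta>1>0. \<forall>\<delta>. 0 < \<delta> \<longrightarrow> \<delta> < \<delta>1 \<longrightarrow> real (Na \<delta>) \<ge> ln \<delta> / ln (R - \<eta>)"
  shows "((\<lambda>\<delta>. Nc \<delta> / real (Na \<delta>)) \<longlongrightarrow> 1) (at_right 0)"
proof (rule tendstoI)
  fix e :: real assume e: "e > 0"
  define a where "a = - ln R"
  have a0: "a > 0" unfolding a_def using R by simp
  define v where "v = exp ((1 + e/2) * ln R)"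
  have v0: "v > 0" unfolding v_def by simp
  have vR: "v < R"
  proof -
    have "(1 + e/2) * ln R < ln R" using e a0 unfolding a_def by (simp add: mult_pos_neg algebra_simps)
    hence "v < exp (ln R)" unfolding v_def by simp
    thus ?thesis using R by simp
  qed
  define \<eta> where "\<eta> = (R - v) / 2"
  have eta0: "\<eta> > 0" "\<eta> < R" unfolding \<eta>_def using vR v0 by auto
  have Rv: "R - \<eta> > v" "R - \<eta> < 1" unfolding \<eta>_def using vR R by (auto simp: field_simps)
  define b where "b = - ln (R - \<eta>)"
  have b0: "b > 0" unfolding b_def using Rv v0 by simp
  have ba: "b < (1 + e/2) * a"
  proof -
    have "ln v < ln (R - \<eta>)" using Rv v0 by simp
    thus ?thesis unfolding b_def a_def v_def by simp
  qed
  obtain \<delta>1 where d1: "\<delta>1 > 0" "\<And>\<delta>. 0 < \<delta> \<Longrightarrow> \<delta> < \<delta>1 \<Longrightarrow> real (Na \<delta>) \<ge> ln \<delta> / ln (R - \<eta>)"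
    using low[OF eta0] by blast
  define l0 where "l0 = max (2 * (1 + e) * ln 2 / e) (a / e) + 1"
  define \<delta>2 where "\<delta>2 = min \<delta>1 (min 1 (2 * exp (- l0)))"
  have d20: "\<delta>2 > 0" unfolding \<delta>2_def using d1 by simp
  show "eventually (\<lambda>\<delta>. dist (Nc \<delta> / real (Na \<delta>)) 1 < e) (at_right 0)"
    unfolding eventually_at_right[OF d20]
  proof (intro exI[of _ \<delta>2] conjI allI impI d20)
    fix \<delta> :: real assume dp: "\<delta> > 0" and dl: "\<delta> < \<delta>2"
    have dl1: "\<delta> < \<delta>1" "\<delta> < 1" "\<delta> < 2 * exp (- l0)" using dl unfolding \<delta>2_def by auto
    define l where "l = - ln (\<delta>/2)"
    have ll0: "l > l0"
    proof -
      have "\<delta>/2 < exp (- l0)" using dl1 by simp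
      hence "ln (\<delta>/2) < ln (exp (- l0))" using dp by (subst ln_less_cancel_iff) auto
      thus ?thesis unfolding l_def by simp
    qed
    have l1: "l \<ge> 2 * (1 + e) * ln 2 / e + 1" "l \<ge> a / e + 1" using ll0 unfolding l0_def by auto
    have ln2: "ln (2::real) > 0" by simp
    have lpos: "l > ln 2"
    proof -
      have "2 * (1 + e) * ln 2 / e \<ge> 0" using e ln2 by simp
      moreover have "ln (2::real) < 1" using ln_less_self[of 2] ln_2_less_1 by simp
      ultimately show ?thesis using l1 by linarith
    qed
    define x where "x = l / a"
    have Ncx: "Nc \<delta> = x" unfolding Nc[OF dp dl1(2)] x_def l_def a_def by (simp add: divide_simps)
    have lp: "l > 0" using lpos ln2 by linarith
  have x0: "x > 0" unfolding x_def using lp a0 by (intro divide_pos_pos) auto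
    define N where "N = real (Na \<delta>)"
    have Nup: "N \<le> x + 1" and N1: "N \<ge> 1"
      using up[OF dp dl1(2)] unfolding N_def x_def l_def a_def by (auto simp: divide_simps)
    have Nlow: "N \<ge> (l - ln 2) / b"
    proof -
      have "ln \<delta> = ln (\<delta>/2) + ln 2" using dp by (simp add: ln_div)
      hence "ln \<delta> / ln (R - \<eta>) = (l - ln 2) / b" unfolding l_def b_def by (simp add: divide_simps)
      thus ?thesis using d1(2)[OF dp dl1(1)] unfolding N_def by simp
    qed
    have N0: "N > 0" using N1 by simp
    have lower: "x / N > 1 - e"
    proof -
      have "x / (x + 1) \<le> x / N" using x0 N0 Nup by (intro divide_left_mono) auto
      moreover have "x / (x + 1) > 1 - e"
      proof -
        have "x > 1 / e"
        proof -
          have "l > a / e" using l1 by simp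
          hence "l / a > (a / e) / a" using a0 by (intro divide_strict_right_mono) auto
          thus ?thesis unfolding x_def using a0 by simp
        qed
        hence "x * e > 1" using e by (simp add: divide_simps)
        hence "1 < e * (x + 1)" using e by (simp add: algebra_simps)
        hence "1 / (x + 1) < e" using x0 by (simp add: divide_simps)
        moreover have "x / (x + 1) = 1 - 1 / (x + 1)" using x0 by (simp add: divide_simps)
        ultimately show ?thesis by simp
      qed
      ultimately show ?thesis by simp
    qed
    have upper: "x / N < 1 + e"
    proof -
      have p: "(l - ln 2) / b > 0" using lpos b0 by simp
      have pp: "0 < N * ((l - ln 2) / b)" using N0 p by (rule mult_pos_pos)
      have "x / N \<le> x / ((l - ln 2) / b)" using x0 pp Nlow by (intro divide_left_mono) auto
      also have "\<dots> = (l / a) * b / (l - ln 2)" unfolding x_def by simp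
      also have "\<dots> < (l / a) * ((1 + e/2) * a) / (l - ln 2)"
        using ba x0 lpos unfolding x_def[symmetric]
        by (intro divide_strict_right_mono mult_strict_left_mono) auto
      also have "\<dots> = l * (1 + e/2) / (l - ln 2)" using a0 by simp
      also have "\<dots> \<le> 1 + e"
      proof -
        have "2 * (1 + e) * ln 2 / e \<le> l" using l1 by simp
        hence "2 * (1 + e) * ln 2 \<le> l * e" using e by (simp add: divide_simps)
        hence "l * (1 + e/2) \<le> (1 + e) * (l - ln 2)" by (simp add: algebra_simps)
        thus ?thesis using lpos by (simp add: divide_simps algebra_simps)
      qed
      finally show ?thesis .
    qed
    show "dist (Nc \<delta> / real (Na \<delta>)) 1 < e"
      unfolding Ncx N_def[symmetric] dist_real_def using lower upper by linarith
  qed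
qed

lemma max_ratio:
  fixes L F G :: real
  assumes "L < 0" "0 \<le> G" "G \<le> F" "0 < F" "F < 1"
  shows "max (L / ln F) (L / ln G) = L / ln F"
proof (cases "G = 0")
  case True
  have "L / ln F > 0" using assms by (simp add: divide_neg_neg)
  thus ?thesis using True by simp
next
  case False
  hence G0: "G > 0" using assms by simp
  have "ln G \<le> ln F" using G0 assms by simp
  hence "-ln F \<le> -ln G" by simp
  moreover have "-ln F > 0" using assms by simp
  moreover have lnG: "ln G < 0" using G0 assms by simp
  moreover have "0 < (-ln G) * (-ln F)" using lnG \<open>-ln F > 0\<close> by (intro mult_pos_pos) auto
  ultimately have "(-L) / (-ln G) \<le> (-L) / (-ln F)" using assms
    by (intro divide_left_mono) auto
  thus ?thesis by (simp add: max_def)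
qed

locale iid = prob_space M for M :: "'a measure" +
  fixes X :: "nat \<Rightarrow> 'a \<Rightarrow> real"
  assumes ind: "indep_vars (\<lambda>_. borel) X UNIV"
    and ide: "\<And>i. distr M borel (X i) = distr M borel (X 0)"
    and mgf: "\<And>t. integrable M (\<lambda>\<omega>. exp (t * X 0 \<omega>))"
    and intX: "integrable M (X 0)"
begin

lemma Xmeas[measurable]: "X i \<in> borel_measurable M"
  using ind unfolding indep_vars_def by auto

lemma prod_int:
  fixes g :: "real \<Rightarrow> real"
  assumes g[measurable]: "g \<in> borel_measurable borel" and gi: "integrable M (\<lambda>\<omega>. g (X 0 \<omega>))"
  shows "integrable M (\<lambda>\<omega>. \<Prod>i<n. g (X i \<omega>))"
    and "(\<integral>\<omega>. (\<Prod>i<n. g (X i \<omega>)) \<partial>M) = (\<integral>\<omega>. g (X 0 \<omega>) \<partial>M) ^ n"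
proof -
  have I: "indep_vars (\<lambda>_. borel) (\<lambda>i x. g (X i x)) {..<n}"
    by (rule indep_vars_subset[OF indep_vars_compose2[OF ind]]) auto
  have gi': "integrable M (\<lambda>\<omega>. g (X i \<omega>))" for i
  proof -
    have "integrable (distr M borel (X 0)) g" using gi by (subst integrable_distr_eq) auto
    hence "integrable (distr M borel (X i)) g" using ide[of i] by simp
    thus ?thesis by (subst (asm) integrable_distr_eq) auto
  qed
  have ge: "(\<integral>\<omega>. g (X i \<omega>) \<partial>M) = (\<integral>\<omega>. g (X 0 \<omega>) \<partial>M)" for i
  proof -
    have "(\<integral>\<omega>. g (X i \<omega>) \<partial>M) = integral\<^sup>L (distr M borel (X i)) g" by (subst integral_distr) auto
    also have "\<dots> = integral\<^sup>L (distr M borel (X 0)) g" using ide[of i] by simp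
    also have "\<dots> = (\<integral>\<omega>. g (X 0 \<omega>) \<partial>M)" by (subst integral_distr) auto
    finally show ?thesis .
  qed
  show "integrable M (\<lambda>\<omega>. \<Prod>i<n. g (X i \<omega>))"
    by (rule indep_vars_integrable[OF _ I]) (auto intro: gi')
  have "(\<integral>\<omega>. (\<Prod>i<n. g (X i \<omega>)) \<partial>M) = (\<Prod>i<n. \<integral>\<omega>. g (X i \<omega>) \<partial>M)"
    by (rule indep_vars_lebesgue_integral[OF _ I]) (auto intro: gi')
  also have "\<dots> = (\<Prod>i<n. \<integral>\<omega>. g (X 0 \<omega>) \<partial>M)" by (rule prod.cong[OF refl ge])
  also have "\<dots> = (\<integral>\<omega>. g (X 0 \<omega>) \<partial>M) ^ n" by simp
  finally show "(\<integral>\<omega>. (\<Prod>i<n. g (X i \<omega>)) \<partial>M) = (\<integral>\<omega>. g (X 0 \<omega>) \<partial>M) ^ n" .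
qed

definition phi :: "real \<Rightarrow> real \<Rightarrow> real \<Rightarrow> real" where
  "phi c d t = (\<integral>\<omega>. exp (t * (c + d * X 0 \<omega>)) \<partial>M)"

lemma int_exp: "integrable M (\<lambda>\<omega>. exp (t * (c + d * X 0 \<omega>)))"
proof -
  have "integrable M (\<lambda>\<omega>. exp (t*c) * exp ((t*d) * X 0 \<omega>))" using mgf by simp
  thus ?thesis by (simp add: algebra_simps exp_add[symmetric])
qed

lemma phi_pos: "phi c d t > 0"
proof -
  have "integral\<^sup>L M (\<lambda>_. 0::real) < phi c d t"
    unfolding phi_def by (rule integral_less_AE_space) (auto simp: int_exp emeasure_space_1)
  thus ?thesis by simp
qed

lemma mgf_sum:
  shows "integrable M (\<lambda>\<omega>. exp (t * (\<Sum>i<n. c + d * X i \<omega>)))"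
    and "(\<integral>\<omega>. exp (t * (\<Sum>i<n. c + d * X i \<omega>)) \<partial>M) = phi c d t ^ n"
proof -
  have e: "exp (t * (\<Sum>i<n. c + d * X i \<omega>)) = (\<Prod>i<n. (\<lambda>x. exp (t * (c + d * x))) (X i \<omega>))" for \<omega>
    by (simp add: sum_distrib_left exp_sum)
  show "integrable M (\<lambda>\<omega>. exp (t * (\<Sum>i<n. c + d * X i \<omega>)))"
    unfolding e by (rule prod_int) (auto simp: int_exp)
  show "(\<integral>\<omega>. exp (t * (\<Sum>i<n. c + d * X i \<omega>)) \<partial>M) = phi c d t ^ n"
    unfolding e phi_def by (rule prod_int) (auto simp: int_exp)
qed

lemma meas_ind: "measure M {\<omega>\<in>space M. P \<omega>} = (\<integral>\<omega>. indicator {\<omega>\<in>space M. P \<omega>} \<omega> \<partial>M)"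
proof -
  have "{\<omega>\<in>space M. P \<omega>} \<inter> space M = {\<omega>\<in>space M. P \<omega>}" by auto
  thus ?thesis by simp
qed

lemma prob_all:
  "measure M {\<omega>\<in>space M. \<forall>i<n. c + d * X i \<omega> \<ge> 0} = measure M {\<omega>\<in>space M. c + d * X 0 \<omega> \<ge> 0} ^ n"
proof -
  define g where "g x = (if c + d * x \<ge> 0 then 1 else (0::real))" for x
  have gm[measurable]: "g \<in> borel_measurable borel" unfolding g_def by measurable
  have pw: "indicator {\<omega> \<in> space M. \<forall>i<n. 0 \<le> c + d * X i \<omega>} \<omega> = (\<Prod>i<n. g (X i \<omega>))" if "\<omega> \<in> space M" for \<omega>
  proof (cases "\<forall>i<n. 0 \<le> c + d * X i \<omega>")
    case True thus ?thesis using that by (simp add: g_def indicator_def)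
  next
    case F2: False
    then obtain i where "i < n" "\<not> 0 \<le> c + d * X i \<omega>" by auto
    hence "(\<Prod>i<n. g (X i \<omega>)) = 0" by (subst prod_zero_iff) (auto simp: g_def)
    thus ?thesis using F2 by (auto simp: indicator_def)
  qed
  have 1: "measure M {\<omega>\<in>space M. \<forall>i<n. c + d * X i \<omega> \<ge> 0} = (\<integral>\<omega>. (\<Prod>i<n. g (X i \<omega>)) \<partial>M)"
    unfolding meas_ind[of "\<lambda>\<omega>. \<forall>i<n. 0 \<le> c + d * X i \<omega>"] by (intro Bochner_Integration.integral_cong refl pw)
  have 2: "measure M {\<omega>\<in>space M. c + d * X 0 \<omega> \<ge> 0} = (\<integral>\<omega>. g (X 0 \<omega>) \<partial>M)"
    unfolding meas_ind[of "\<lambda>\<omega>. 0 \<le> c + d * X 0 \<omega>"] by (intro Bochner_Integration.integral_cong refl) (auto simp: g_def indicator_def)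
  have gi: "integrable M (\<lambda>\<omega>. g (X 0 \<omega>))"
    by (rule integrable_const_bound[where B=1]) (auto simp: g_def)
  show ?thesis unfolding 1 2 by (rule prod_int(2)[OF gm gi])
qed

lemma upper:
  assumes "t \<ge> 0"
  shows "measure M {\<omega>\<in>space M. (\<Sum>i<n. c + d * X i \<omega>) \<ge> 0} \<le> phi c d t ^ n"
proof -
  have "measure M {\<omega>\<in>space M. (\<Sum>i<n. c + d * X i \<omega>) \<ge> 0}
     = (\<integral>\<omega>. indicator {\<omega>\<in>space M. (\<Sum>i<n. c + d * X i \<omega>) \<ge> 0} \<omega> \<partial>M)"
    by (rule meas_ind)
  also have "\<dots> \<le> (\<integral>\<omega>. exp (t * (\<Sum>i<n. c + d * X i \<omega>)) \<partial>M)"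
    using assms by (intro integral_mono mgf_sum integrable_real_indicator) (auto simp: indicator_def less_top[symmetric])
  also have "\<dots> = phi c d t ^ n" by (rule mgf_sum)
  finally show ?thesis .
qed
lemma phi0: "phi c d 0 = 1" unfolding phi_def by (simp add: prob_space)

lemma int_Y: "integrable M (\<lambda>\<omega>. c + d * X 0 \<omega>)" using intX by simp

lemma int_Y_eq: "(\<integral>\<omega>. c + d * X 0 \<omega> \<partial>M) = c + d * expectation (X 0)"
  using intX by (simp add: prob_space)

lemma int_comb:
  fixes f g h :: "'a \<Rightarrow> real"
  assumes "integrable M f" "integrable M g" "integrable M h"
  shows "(\<integral>\<omega>. 1 + a * f \<omega> + b*(g \<omega> + h \<omega>) \<partial>M) = 1 + a*(\<integral>\<omega>. f \<omega> \<partial>M) + b*((\<integral>\<omega>. g \<omega> \<partial>M) + (\<integral>\<omega>. h \<omega> \<partial>M))"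
  using assms by (simp add: prob_space Bochner_Integration.integral_add)

lemma phi_quad:
  assumes "\<bar>t\<bar> \<le> 1"
  shows "phi c d t \<le> 1 + t*(c + d*expectation (X 0)) + 4*t^2*(phi c d 2 + phi c d (-2))"
proof -
  have "phi c d t \<le> (\<integral>\<omega>. 1 + t*(c + d * X 0 \<omega>) + 4*t^2*(exp(2*(c + d * X 0 \<omega>)) + exp(-2*(c + d * X 0 \<omega>))) \<partial>M)"
    unfolding phi_def using assms
    by (intro integral_mono Ld int_exp Bochner_Integration.integrable_add integrable_mult_right int_Y) auto
  also have "\<dots> = 1 + t*(c + d*expectation (X 0)) + 4*t^2*(phi c d 2 + phi c d (-2))"
    unfolding phi_def int_Y_eq[symmetric] by (rule int_comb[OF int_Y int_exp int_exp])
  finally show ?thesis .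
qed

lemma phi_ge1:
  assumes "t \<le> 0" "c + d*expectation (X 0) \<le> 0"
  shows "phi c d t \<ge> 1"
proof -
  have "(\<integral>\<omega>. 1 + t*(c + d * X 0 \<omega>) \<partial>M) \<le> phi c d t"
    unfolding phi_def
    by (intro integral_mono int_exp Bochner_Integration.integrable_add integrable_mult_right int_Y) auto
  moreover have "(\<integral>\<omega>. 1 + t*(c + d * X 0 \<omega>) \<partial>M) = 1 + t*(c + d*expectation (X 0))"
    by (simp add: int_Y int_Y_eq prob_space Bochner_Integration.integral_add)
  moreover have "t*(c + d*expectation (X 0)) \<ge> 0" using assms by (simp add: mult_nonpos_nonpos)
  ultimately show ?thesis by linarith
qed

lemma int_lin2:
  fixes f g :: "'a \<Rightarrow> real"
  assumes "integrable M f" "integrable M g"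
  shows "(\<integral>\<omega>. a * f \<omega> + b * g \<omega> \<partial>M) = a * (\<integral>\<omega>. f \<omega> \<partial>M) + b * (\<integral>\<omega>. g \<omega> \<partial>M)"
  using assms by (simp add: Bochner_Integration.integral_add)

lemma int_lin3:
  fixes f g h :: "'a \<Rightarrow> real"
  assumes "integrable M f" "integrable M g" "integrable M h"
  shows "(\<integral>\<omega>. a * (f \<omega> - g \<omega> - b * h \<omega>) \<partial>M) = a * ((\<integral>\<omega>. f \<omega> \<partial>M) - (\<integral>\<omega>. g \<omega> \<partial>M) - b * (\<integral>\<omega>. h \<omega> \<partial>M))"
  using assms by (simp add: Bochner_Integration.integral_diff)

lemma int_lin4:
  fixes f g h :: "'a \<Rightarrow> real"
  assumes "integrable M f" "integrable M g" "integrable M h"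
  shows "(\<integral>\<omega>. a * f \<omega> + b * (g \<omega> + h \<omega>) \<partial>M) = a * (\<integral>\<omega>. f \<omega> \<partial>M) + b * ((\<integral>\<omega>. g \<omega> \<partial>M) + (\<integral>\<omega>. h \<omega> \<partial>M))"
  using assms by (simp add: Bochner_Integration.integral_add)

lemma int_sum2:
  fixes f g :: "'a \<Rightarrow> real"
  assumes "integrable M f" "integrable M g"
  shows "(\<integral>\<omega>. f \<omega> + g \<omega> \<partial>M) = (\<integral>\<omega>. f \<omega> \<partial>M) + (\<integral>\<omega>. g \<omega> \<partial>M)"
  using assms by (simp add: Bochner_Integration.integral_add)

lemma phi_convex: "convex_on UNIV (phi c d)"
proof (rule convex_onI)
  fix l x y :: real assume l: "0 < l" "l < 1"
  have "phi c d ((1 - l) *\<^sub>R x + l *\<^sub>R y) \<le> (\<integral>\<omega>. (1-l) * exp (x * (c + d * X 0 \<omega>)) + l * exp (y * (c + d * X 0 \<omega>)) \<partial>M)"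
    unfolding phi_def
  proof (intro integral_mono int_exp Bochner_Integration.integrable_add integrable_mult_right)
    fix \<omega>
    have "exp ((1 - l) *\<^sub>R (x * (c + d * X 0 \<omega>)) + l *\<^sub>R (y * (c + d * X 0 \<omega>))) \<le> (1-l) * exp (x * (c + d * X 0 \<omega>)) + l * exp (y * (c + d * X 0 \<omega>))"
      using l by (intro convex_onD[OF exp_convex]) auto
    thus "exp (((1 - l) *\<^sub>R x + l *\<^sub>R y) * (c + d * X 0 \<omega>)) \<le> (1-l) * exp (x * (c + d * X 0 \<omega>)) + l * exp (y * (c + d * X 0 \<omega>))"
      by (simp add: algebra_simps)
  qed
  also have "\<dots> = (1 - l) * phi c d x + l * phi c d y" unfolding phi_def by (rule int_lin2[OF int_exp int_exp])
  finally show "phi c d ((1 - l) *\<^sub>R x + l *\<^sub>R y) \<le> (1 - l) * phi c d x + l * phi c d y" .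
qed simp

lemma phi_cont: "continuous_on UNIV (phi c d)"
  by (rule convex_on_continuous[OF open_UNIV phi_convex])

lemma phi_sd:
  assumes "\<bar>h\<bar> \<le> 1"
  shows "phi c d (s+h) + phi c d (s-h) \<le> 2 * phi c d s + 8*h^2*(phi c d (s+2) + phi c d (s-2))"
proof -
  have "phi c d (s+h) + phi c d (s-h) = (\<integral>\<omega>. exp ((s+h) * (c + d * X 0 \<omega>)) + exp ((s-h) * (c + d * X 0 \<omega>)) \<partial>M)"
    unfolding phi_def by (rule int_sum2[OF int_exp int_exp, symmetric])
  also have "\<dots> \<le> (\<integral>\<omega>. 2 * exp (s * (c + d * X 0 \<omega>)) + 8*h^2 * (exp ((s+2) * (c + d * X 0 \<omega>)) + exp ((s-2) * (c + d * X 0 \<omega>))) \<partial>M)"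
    using assms by (intro integral_mono int_exp Bochner_Integration.integrable_add integrable_mult_right Le)
  also have "\<dots> = 2 * phi c d s + 8*h^2*(phi c d (s+2) + phi c d (s-2))"
    unfolding phi_def by (rule int_lin4[OF int_exp int_exp int_exp])
  finally show ?thesis .
qed

lemma main_ineq:
  assumes "s \<ge> 0" "u \<ge> 0" "h \<ge> 0" "K \<ge> 0"
  shows "exp(-s*K) * (phi c d s ^ n - phi c d (s-u) ^ n - exp (-h*K) * phi c d (s+h) ^ n)
     \<le> measure M {\<omega>\<in>space M. (\<Sum>i<n. c + d * X i \<omega>) \<ge> 0}"
proof -
  define S where "S \<omega> = (\<Sum>i<n. c + d * X i \<omega>)" for \<omega>
  have "exp(-s*K) * (phi c d s ^ n - phi c d (s-u) ^ n - exp (-h*K) * phi c d (s+h) ^ n)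
      = (\<integral>\<omega>. exp(-s*K) * (exp (s * S \<omega>) - exp ((s-u) * S \<omega>) - exp (-h*K) * exp ((s+h) * S \<omega>)) \<partial>M)"
    unfolding S_def mgf_sum(2)[symmetric] by (rule int_lin3[OF mgf_sum(1) mgf_sum(1) mgf_sum(1), symmetric])
  also have "\<dots> \<le> (\<integral>\<omega>. indicator {\<omega>\<in>space M. S \<omega> \<ge> 0} \<omega> \<partial>M)"
  proof (intro integral_mono integrable_mult_right Bochner_Integration.integrable_diff)
    show "integrable M (\<lambda>\<omega>. exp (s * S \<omega>))" "integrable M (\<lambda>\<omega>. exp ((s-u) * S \<omega>))"
      "integrable M (\<lambda>\<omega>. exp ((s+h) * S \<omega>))" unfolding S_def by (rule mgf_sum)+
    show "integrable M (indicator {\<omega>\<in>space M. S \<omega> \<ge> 0} :: 'a \<Rightarrow> real)"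
      unfolding S_def by (intro integrable_real_indicator) (measurable, simp add: less_top[symmetric])
    fix \<omega> assume "\<omega> \<in> space M"
    have "exp(-s*K) * (exp (s * S \<omega>) - exp ((s-u) * S \<omega>) - exp (-h*K) * exp ((s+h) * S \<omega>))
        = exp(-s*K) * (exp (s * S \<omega>) - exp ((s-u) * S \<omega>) - exp ((s+h) * S \<omega> - h*K))"
      by (simp add: exp_diff exp_minus field_simps)
    also have "\<dots> \<le> (if S \<omega> \<ge> 0 then 1 else 0)" by (rule Lind[OF assms])
    also have "\<dots> = indicator {\<omega>\<in>space M. S \<omega> \<ge> 0} \<omega>" using \<open>\<omega> \<in> space M\<close> by (simp add: indicator_def)
    finally show "exp(-s*K) * (exp (s * S \<omega>) - exp ((s-u) * S \<omega>) - exp (-h*K) * exp ((s+h) * S \<omega>)) \<le> indicator {\<omega>\<in>space M. S \<omega> \<ge> 0} \<omega>" .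
  qed
  also have "\<dots> = measure M {\<omega>\<in>space M. (\<Sum>i<n. c + d * X i \<omega>) \<ge> 0}"
    unfolding S_def by (rule meas_ind[symmetric])
  finally show ?thesis .
qed

definition Fv :: "real \<Rightarrow> real \<Rightarrow> real" where
  "Fv c d = (INF t\<in>{0::real<..}. phi c d t)"

definition Pn :: "real \<Rightarrow> real \<Rightarrow> nat \<Rightarrow> real" where
  "Pn c d n = measure M {\<omega>\<in>space M. (\<Sum>i<n. c + d * X i \<omega>) \<ge> 0}"

lemma bdd_phi: "bdd_below (phi c d ` A)"
  by (rule bdd_belowI[of _ 0]) (auto intro: less_imp_le phi_pos)

lemma Fv_le: "t > 0 \<Longrightarrow> Fv c d \<le> phi c d t"
  unfolding Fv_def by (rule cINF_lower[OF bdd_phi]) simp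

lemma Fv_ge: "(\<And>t. t > 0 \<Longrightarrow> a \<le> phi c d t) \<Longrightarrow> a \<le> Fv c d"
  unfolding Fv_def by (rule cINF_greatest) auto

lemma phi_ge_q: "t \<ge> 0 \<Longrightarrow> prob {\<omega>\<in>space M. c + d * X 0 \<omega> \<ge> 0} \<le> phi c d t"
  using upper[where n=1 and t=t and c=c and d=d] by simp

lemma Fv_ge_q: "prob {\<omega>\<in>space M. c + d * X 0 \<omega> \<ge> 0} \<le> Fv c d"
  by (rule Fv_ge, rule phi_ge_q) simp

lemma Fv_lt1:
  assumes "c + d*expectation (X 0) < 0"
  shows "Fv c d < 1"
proof -
  define e where "e = c + d*expectation (X 0)"
  define C where "C = phi c d 2 + phi c d (-2)"
  have C0: "C > 0" unfolding C_def using phi_pos[of c d 2] phi_pos[of c d "-2"] by simp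
  define t where "t = min (1/2) (-e/(8*C))"
  have t0: "t > 0" unfolding t_def using assms C0 by (simp add: e_def)
  have t1: "t \<le> 1/2" unfolding t_def by simp
  have t2: "t \<le> -e/(8*C)" unfolding t_def by simp
  have "phi c d t \<le> 1 + t*e + 4*t^2*C" using phi_quad[of t c d] t0 t1 by (simp add: e_def C_def)
  moreover have "4*t^2*C < - (t*e)"
  proof -
    have "4*t*C \<le> 4*(-e/(8*C))*C" using t2 C0 by (intro mult_right_mono mult_left_mono) auto
    also have "\<dots> = -e/2" using C0 by simp
    also have "\<dots> < -e" using assms by (simp add: e_def)
    finally have "4*t*C < -e" .
    hence "t * (4*t*C) < t * (-e)" using t0 by (intro mult_strict_left_mono) auto
    thus ?thesis by (simp add: power2_eq_square algebra_simps)
  qed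
  ultimately have "phi c d t < 1" by linarith
  thus ?thesis using Fv_le[OF t0, of c d] by linarith
qed

lemma Pn_upper: "Pn c d n \<le> Fv c d ^ n"
proof (cases "n = 0")
  case True thus ?thesis by (simp add: Pn_def)
next
  case False
  have P0: "Pn c d n \<ge> 0" by (simp add: Pn_def)
  have "root n (Pn c d n) \<le> Fv c d"
  proof (rule Fv_ge)
    fix t :: real assume t: "t > 0"
    have "Pn c d n \<le> phi c d t ^ n" unfolding Pn_def by (rule upper) (use t in simp)
    hence "root n (Pn c d n) \<le> root n (phi c d t ^ n)" using False by simp
    also have "\<dots> = phi c d t" using False phi_pos[of c d t] by (simp add: real_root_power_cancel)
    finally show "root n (Pn c d n) \<le> phi c d t" .
  qed
  hence "root n (Pn c d n) ^ n \<le> Fv c d ^ n" using P0 by (intro power_mono real_root_ge_zero) auto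
  thus ?thesis using False P0 by simp
qed

lemma Pn_lower_q: "prob {\<omega>\<in>space M. c + d * X 0 \<omega> \<ge> 0} ^ n \<le> Pn c d n"
proof -
  have "prob {\<omega>\<in>space M. \<forall>i<n. c + d * X i \<omega> \<ge> 0} \<le> Pn c d n"
    unfolding Pn_def by (intro finite_measure_mono) (auto intro: sum_nonneg)
  thus ?thesis using prob_all by simp
qed

lemma phi_big:
  assumes "prob {\<omega>\<in>space M. c + d * X 0 \<omega> > 0} > 0"
  shows "\<exists>T>0. \<forall>t\<ge>T. phi c d t > 1"
proof -
  define A where "A k = {\<omega>\<in>space M. c + d * X 0 \<omega> > 1 / real (Suc k)}" for k
  have "(\<lambda>k. prob (A k)) \<longlonglongrightarrow> prob (\<Union>k. A k)"
  proof (rule finite_Lim_measure_incseq)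
    show "range A \<subseteq> sets M" unfolding A_def by auto
    show "incseq A" unfolding A_def incseq_def
    proof (intro allI impI subsetI)
      fix m n :: nat and \<omega> assume mn: "m \<le> n" and w: "\<omega> \<in> {\<omega> \<in> space M. 1 / real (Suc m) < c + d * X 0 \<omega>}"
      have "1 / real (Suc n) \<le> 1 / real (Suc m)" using mn by (intro divide_left_mono) auto
      thus "\<omega> \<in> {\<omega> \<in> space M. 1 / real (Suc n) < c + d * X 0 \<omega>}" using w by auto
    qed
  qed
  moreover have "(\<Union>k. A k) = {\<omega>\<in>space M. c + d * X 0 \<omega> > 0}"
  proof
    show "(\<Union>k. A k) \<subseteq> {\<omega>\<in>space M. c + d * X 0 \<omega> > 0}" unfolding A_def
      by (auto intro: less_trans[rotated])
    show "{\<omega>\<in>space M. c + d * X 0 \<omega> > 0} \<subseteq> (\<Union>k. A k)"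
    proof
      fix \<omega> assume w: "\<omega> \<in> {\<omega>\<in>space M. c + d * X 0 \<omega> > 0}"
      then obtain k where "inverse (real (Suc k)) < c + d * X 0 \<omega>"
        using reals_Archimedean by auto
      thus "\<omega> \<in> (\<Union>k. A k)" using w unfolding A_def by (auto simp: divide_inverse)
    qed
  qed
  ultimately have "(\<lambda>k. prob (A k)) \<longlonglongrightarrow> prob {\<omega>\<in>space M. c + d * X 0 \<omega> > 0}" by simp
  hence "eventually (\<lambda>k. prob (A k) > 0) sequentially" using assms by (rule order_tendstoD)
  then obtain k where pk: "prob (A k) > 0" by (metis eventually_sequentially order_refl)
  define g where "g = 1 / real (Suc k)"
  define p where "p = prob (A k)"
  have g0: "g > 0" unfolding g_def by simp
  have p0: "p > 0" unfolding p_def using pk .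
  have low: "exp (t * g) * p \<le> phi c d t" if t: "t \<ge> 0" for t
  proof -
    have "exp (t * g) * p = (\<integral>\<omega>. exp (t * g) * indicator (A k) \<omega> \<partial>M)"
      unfolding p_def by (simp add: A_def)
    also have "\<dots> \<le> phi c d t" unfolding phi_def
    proof (intro integral_mono integrable_mult_right int_exp integrable_real_indicator)
      show "A k \<in> sets M" unfolding A_def by measurable
      show "emeasure M (A k) < \<infinity>" by (simp add: less_top[symmetric])
      fix \<omega> assume "\<omega> \<in> space M"
      show "exp (t * g) * indicator (A k) \<omega> \<le> exp (t * (c + d * X 0 \<omega>))"
      proof (cases "\<omega> \<in> A k")
        case True
        hence "g < c + d * X 0 \<omega>" unfolding A_def g_def by auto
        hence "t * g \<le> t * (c + d * X 0 \<omega>)" using t by (intro mult_left_mono) auto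
        thus ?thesis using True by simp
      next
        case False thus ?thesis by simp
      qed
    qed
    finally show ?thesis .
  qed
  define T where "T = 1 / (p * g)"
  have T0: "T > 0" unfolding T_def using p0 g0 by simp
  show ?thesis
  proof (intro exI[of _ T] conjI allI impI T0)
    fix t assume tT: "t \<ge> T"
    have "1 + t*g \<le> exp (t*g)" by (rule exp_ge_add_one_self)
    moreover have "T * g = 1/p" unfolding T_def using p0 g0 by simp
    moreover have "T * g \<le> t * g" using tT g0 by (intro mult_right_mono) auto
    ultimately have "1/p < exp (t*g)" by linarith
    hence "1 < exp (t*g) * p" using p0 by (simp add: field_simps)
    thus "phi c d t > 1" using low[of t] tT T0 by linarith
  qed
qed

lemma Fv_caseA:
  assumes "prob {\<omega>\<in>space M. c + d * X 0 \<omega> > 0} = 0"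
  shows "Fv c d \<le> prob {\<omega>\<in>space M. c + d * X 0 \<omega> \<ge> 0}"
proof -
  define q where "q = prob {\<omega>\<in>space M. c + d * X 0 \<omega> \<ge> 0}"
  define B where "B k = {\<omega>\<in>space M. - (1 / real (Suc k)) < c + d * X 0 \<omega> \<and> c + d * X 0 \<omega> < 0}" for k
  have AE0: "AE \<omega> in M. c + d * X 0 \<omega> \<le> 0"
  proof -
    have "emeasure M {\<omega>\<in>space M. c + d * X 0 \<omega> > 0} = 0"
      using assms by (simp add: emeasure_eq_measure)
    moreover have "{\<omega>\<in>space M. \<not> (c + d * X 0 \<omega> \<le> 0)} = {\<omega>\<in>space M. c + d * X 0 \<omega> > 0}" by auto
    ultimately show ?thesis by (subst AE_iff_measurable) auto
  qed
  have bound: "Fv c d \<le> q + prob (B k) + exp (- real (Suc k))" for k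
  proof -
    define g where "g = 1 / real (Suc k)"
    define t where "t = real (Suc k) * real (Suc k)"
    have g0: "g > 0" and t0: "t > 0" unfolding g_def t_def by auto
    have tg: "t * g = real (Suc k)" unfolding t_def g_def by simp
    have "phi c d t \<le> (\<integral>\<omega>. indicator {\<omega>\<in>space M. c + d * X 0 \<omega> \<ge> 0} \<omega> + indicator (B k) \<omega> + exp (-(t*g)) \<partial>M)"
      unfolding phi_def
    proof (intro integral_mono_AE int_exp Bochner_Integration.integrable_add integrable_real_indicator integrable_const)
      show "{\<omega>\<in>space M. c + d * X 0 \<omega> \<ge> 0} \<in> sets M" "B k \<in> sets M" unfolding B_def by measurable
      show "emeasure M {\<omega>\<in>space M. c + d * X 0 \<omega> \<ge> 0} < \<infinity>" "emeasure M (B k) < \<infinity>"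
        by (simp_all add: less_top[symmetric])
      show "AE \<omega> in M. exp (t * (c + d * X 0 \<omega>)) \<le> indicator {\<omega>\<in>space M. c + d * X 0 \<omega> \<ge> 0} \<omega> + indicator (B k) \<omega> + exp (-(t*g))"
        using AE0 AE_space
      proof eventually_elim
        case (elim \<omega>)
        show ?case
        proof -
          have sp: "\<omega> \<in> space M" using elim by simp
          define y where "y = c + d * X 0 \<omega>"
          have y0: "y \<le> 0" using elim unfolding y_def by simp
          show ?thesis
          proof (cases "y = 0")
            case True thus ?thesis using sp by (simp add: y_def[symmetric] indicator_def B_def)
          next
            case False
            hence yn: "y < 0" using y0 by simp
            show ?thesis
            proof (cases "- g < y")
              case True
              hence "\<omega> \<in> B k" using sp yn unfolding B_def y_def g_def by auto
              hence i1: "indicator (B k) \<omega> = (1::real)" by simp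
              have i2: "indicator {\<omega>\<in>space M. c + d * X 0 \<omega> \<ge> 0} \<omega> = (0::real)" using yn by (simp add: y_def)
              have "t*y \<le> 0" using yn t0 by (simp add: mult_pos_neg less_imp_le)
              hence "exp (t*y) \<le> 1" by simp
              thus ?thesis using i1 i2 exp_gt_zero[of "-(t*g)"] unfolding y_def by linarith
            next
              case F2: False
              hence "t*y \<le> t*(-g)" using t0 by (intro mult_left_mono) auto
              hence e: "exp (t*y) \<le> exp (-(t*g))" by simp
              have i1: "indicator (B k) \<omega> \<ge> (0::real)" by simp
              have i2: "indicator {\<omega>\<in>space M. c + d * X 0 \<omega> \<ge> 0} \<omega> = (0::real)" using yn by (simp add: y_def)
              show ?thesis using e i1 i2 unfolding y_def by linarith
            qed
          qed
        qed
      qed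
    qed
    also have "\<dots> = q + prob (B k) + exp (-(t*g))"
      unfolding q_def
      by (subst Bochner_Integration.integral_add, (auto intro!: integrable_real_indicator simp: B_def less_top[symmetric])[2])
         (subst Bochner_Integration.integral_add, (auto intro!: integrable_real_indicator simp: B_def less_top[symmetric])[2], simp add: prob_space B_def)
    finally have "phi c d t \<le> q + prob (B k) + exp (- real (Suc k))" using tg by simp
    thus ?thesis using Fv_le[OF t0, of c d] by linarith
  qed
  have "(\<lambda>k. prob (B k)) \<longlonglongrightarrow> prob (\<Inter>k. B k)"
  proof (rule finite_Lim_measure_decseq)
    show "range B \<subseteq> sets M" unfolding B_def by auto
    show "decseq B" unfolding B_def decseq_def
    proof (intro allI impI subsetI)
      fix m n :: nat and \<omega> assume mn: "m \<le> n" and w: "\<omega> \<in> {\<omega>\<in>space M. - (1 / real (Suc n)) < c + d * X 0 \<omega> \<and> c + d * X 0 \<omega> < 0}"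
      have "1 / real (Suc n) \<le> 1 / real (Suc m)" using mn by (intro divide_left_mono) auto
      thus "\<omega> \<in> {\<omega>\<in>space M. - (1 / real (Suc m)) < c + d * X 0 \<omega> \<and> c + d * X 0 \<omega> < 0}" using w by auto
    qed
  qed
  moreover have "(\<Inter>k. B k) = {}"
  proof (rule ccontr)
    assume "(\<Inter>k. B k) \<noteq> {}"
    then obtain \<omega> where w: "\<And>k. \<omega> \<in> B k" by auto
    hence neg: "c + d * X 0 \<omega> < 0" unfolding B_def by auto
    obtain k where "inverse (real (Suc k)) < - (c + d * X 0 \<omega>)" using reals_Archimedean[of "- (c + d * X 0 \<omega>)"] neg by auto
    moreover have "- (1 / real (Suc k)) < c + d * X 0 \<omega>" using w[of k] unfolding B_def by auto
    ultimately show False by (simp add: divide_inverse)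
  qed
  ultimately have lim1: "(\<lambda>k. prob (B k)) \<longlonglongrightarrow> 0" by simp
  have lim2: "(\<lambda>k. exp (- real (Suc k))) \<longlonglongrightarrow> 0"
  proof -
    have "(\<lambda>k. exp (-1::real) ^ Suc k) \<longlonglongrightarrow> 0"
    proof (rule LIMSEQ_Suc, rule LIMSEQ_power_zero)
      have "exp (-1::real) < exp 0" by (subst exp_less_cancel_iff) simp
      thus "norm (exp (-1::real)) < 1" by simp
    qed
    moreover have "exp (- real (Suc k)) = exp (-1::real) ^ Suc k" for k
      by (subst exp_of_nat_mult[symmetric]) simp
    ultimately show ?thesis by simp
  qed
  have "(\<lambda>k. q + prob (B k) + exp (- real (Suc k))) \<longlonglongrightarrow> q + 0 + 0"
    by (intro tendsto_add tendsto_const lim1 lim2)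
  hence "Fv c d \<le> q + 0 + 0" by (rule LIMSEQ_le_const) (use bound in blast)
  thus ?thesis unfolding q_def by simp
qed

lemma Pn_lower:
  assumes neg: "c + d*expectation (X 0) < 0" and eta: "\<eta> > 0" and r0: "Fv c d - \<eta> > 0"
  shows "eventually (\<lambda>n. (Fv c d - \<eta>)^n \<le> Pn c d n) sequentially"
proof (cases "prob {\<omega>\<in>space M. c + d * X 0 \<omega> > 0} = 0")
  case True
  have "Fv c d \<le> prob {\<omega>\<in>space M. c + d * X 0 \<omega> \<ge> 0}" by (rule Fv_caseA[OF True])
  hence "(Fv c d - \<eta>)^n \<le> prob {\<omega>\<in>space M. c + d * X 0 \<omega> \<ge> 0} ^ n" for n
    using r0 eta by (intro power_mono) auto
  hence "(Fv c d - \<eta>)^n \<le> Pn c d n" for n using Pn_lower_q[of c d n] order_trans by blast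
  thus ?thesis by simp
next
  case False
  hence pos: "prob {\<omega>\<in>space M. c + d * X 0 \<omega> > 0} > 0" using measure_nonneg[of M "{\<omega>\<in>space M. c + d * X 0 \<omega> > 0}"] by linarith
  obtain T where T: "T > 0" "\<And>t. t \<ge> T \<Longrightarrow> phi c d t > 1" using phi_big[OF pos] by blast
  have "\<exists>s\<ge>0. (\<forall>t. phi c d s \<le> phi c d t) \<and> (\<forall>t>s. phi c d t > phi c d s)"
  proof (rule largest_min[OF phi_cont T(1)])
    fix t :: real
    show "t \<le> 0 \<Longrightarrow> phi c d t \<ge> phi c d 0" using phi_ge1[of t c d] neg by (simp add: phi0)
    show "t \<ge> T \<Longrightarrow> phi c d t > phi c d 0" using T(2)[of t] by (simp add: phi0)
  qed
  then obtain s0 where s0: "s0 \<ge> 0" "\<And>t. phi c d s0 \<le> phi c d t" "\<And>t. t > s0 \<Longrightarrow> phi c d t > phi c d s0"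
    by blast
  have s0pos: "s0 > 0"
  proof (rule ccontr)
    assume "\<not> s0 > 0"
    hence "s0 = 0" using s0(1) by simp
    hence "\<And>t. t > 0 \<Longrightarrow> 1 \<le> phi c d t" using s0(3) by (fastforce simp: phi0)
    hence "1 \<le> Fv c d" by (rule Fv_ge)
    thus False using Fv_lt1[OF neg] by simp
  qed
  have FvS: "Fv c d \<le> phi c d s0" by (rule Fv_le[OF s0pos])
  obtain s u h c' where ch: "s \<ge> 0" "u \<ge> 0" "h \<ge> 0" "c' \<ge> 0" "phi c d (s-u) < phi c d s"
     "phi c d (s+h) * exp (-h*c') < phi c d s" "phi c d s * exp (-s*c') > phi c d s0 - \<eta>"
    using choose[of "phi c d" s0 \<eta>, OF phi_pos s0(1) s0(2) s0(3) phi_sd eta] by blast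
  have ev: "eventually (\<lambda>n. (Fv c d - \<eta>)^n \<le> exp (-s*c')^n * (phi c d s ^ n - phi c d (s-u) ^ n - (phi c d (s+h) * exp (-h*c'))^n)) sequentially"
  proof (rule asym)
    show "0 \<le> phi c d (s-u)" "0 \<le> phi c d (s+h) * exp (-h*c')" using phi_pos[of c d] by (auto intro: less_imp_le)
    show "phi c d (s-u) < phi c d s" "phi c d (s+h) * exp (-h*c') < phi c d s" by (rule ch(5), rule ch(6))
    show "0 < Fv c d - \<eta>" by (rule r0)
    show "Fv c d - \<eta> < phi c d s * exp (-s*c')" using ch(7) FvS by linarith
    show "exp (-s*c') > 0" by simp
  qed
  show ?thesis using ev
  proof eventually_elim
    case (elim n)
    have e1: "exp (-s*(real n * c')) = exp (-s*c')^n"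
      by (subst exp_of_nat_mult[symmetric]) (simp add: algebra_simps)
    have e2: "exp (-h*(real n * c')) = exp (-h*c')^n"
      by (subst exp_of_nat_mult[symmetric]) (simp add: algebra_simps)
    have "exp (-s*c')^n * (phi c d s ^ n - phi c d (s-u) ^ n - (phi c d (s+h) * exp (-h*c'))^n)
        = exp (-s*(real n * c')) * (phi c d s ^ n - phi c d (s-u) ^ n - exp (-h*(real n * c')) * phi c d (s+h) ^ n)"
      unfolding e1 e2 by (simp add: power_mult_distrib mult.commute)
    also have "\<dots> \<le> Pn c d n" unfolding Pn_def
      by (rule main_ineq) (use ch in auto)
    finally show ?case using elim by linarith
  qed
qed

lemma sum_lin: "(\<Sum>i<n. c + d * X i \<omega>) = real n * c + d * (\<Sum>i<n. X i \<omega>)"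
  by (simp add: sum.distrib sum_distrib_left)

lemma main:
  fixes \<mu> \<epsilon> :: real
  assumes mu: "\<mu> = expectation (X 0)" and eps: "\<epsilon> > 0"
    and pos: "prob {\<omega> \<in> space M. \<bar>X 0 \<omega> - \<mu>\<bar> \<ge> \<epsilon>} > 0"
  shows "((\<lambda>\<delta>. N_c M (X 0) \<mu> \<epsilon> \<delta> / real (N_a M X \<mu> \<epsilon> \<delta>)) \<longlongrightarrow> 1) (at_right 0)"
proof -
  define c1 where "c1 = \<mu> - \<epsilon>"
  define d1 where "d1 = (-1::real)"
  define c2 where "c2 = - (\<mu> + \<epsilon>)"
  define d2 where "d2 = (1::real)"
  have neg1: "c1 + d1 * expectation (X 0) < 0" unfolding c1_def d1_def mu using eps by simp
  have neg2: "c2 + d2 * expectation (X 0) < 0" unfolding c2_def d2_def mu using eps by simp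
  define F where "F = Fv c1 d1"
  define G where "G = Fv c2 d2"
  have hF: "chernoff_F M (X 0) \<mu> \<epsilon> = F"
  proof -
    have "(\<lambda>t. \<integral>\<omega>. exp (t * (X 0 \<omega> - \<mu> + \<epsilon>)) \<partial>M) ` {..<0} = phi c1 d1 ` {0<..}"
    proof (intro equalityI subsetI)
      fix y assume "y \<in> (\<lambda>t. \<integral>\<omega>. exp (t * (X 0 \<omega> - \<mu> + \<epsilon>)) \<partial>M) ` {..<0}"
      then obtain t where t: "t < 0" "y = (\<integral>\<omega>. exp (t * (X 0 \<omega> - \<mu> + \<epsilon>)) \<partial>M)" by auto
      have "y = phi c1 d1 (-t)" unfolding t(2) phi_def c1_def d1_def by (simp add: algebra_simps)
      thus "y \<in> phi c1 d1 ` {0<..}" using t(1) by auto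
    next
      fix y assume "y \<in> phi c1 d1 ` {0<..}"
      then obtain t where t: "t > 0" "y = phi c1 d1 t" by auto
      have "y = (\<integral>\<omega>. exp ((-t) * (X 0 \<omega> - \<mu> + \<epsilon>)) \<partial>M)" unfolding t(2) phi_def c1_def d1_def by (simp add: algebra_simps)
      thus "y \<in> (\<lambda>t. \<integral>\<omega>. exp (t * (X 0 \<omega> - \<mu> + \<epsilon>)) \<partial>M) ` {..<0}"
        by (rule image_eqI) (use t(1) in simp)
    qed
    thus ?thesis unfolding chernoff_F_def F_def Fv_def by simp
  qed
  have hG: "chernoff_G M (X 0) \<mu> \<epsilon> = G"
    unfolding chernoff_G_def G_def Fv_def phi_def c2_def d2_def
    by (intro INF_cong refl Bochner_Integration.integral_cong) (simp add: algebra_simps)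
  define q1 where "q1 = prob {\<omega>\<in>space M. c1 + d1 * X 0 \<omega> \<ge> 0}"
  define q2 where "q2 = prob {\<omega>\<in>space M. c2 + d2 * X 0 \<omega> \<ge> 0}"
  have F1: "F < 1" unfolding F_def by (rule Fv_lt1[OF neg1])
  have G1: "G < 1" unfolding G_def by (rule Fv_lt1[OF neg2])
  have qF: "q1 \<le> F" unfolding q1_def F_def by (rule Fv_ge_q)
  have qG: "q2 \<le> G" unfolding q2_def G_def by (rule Fv_ge_q)
  have q10: "q1 \<ge> 0" "q2 \<ge> 0" unfolding q1_def q2_def by simp_all
  have qpos: "q1 + q2 > 0"
  proof -
    have "{\<omega> \<in> space M. \<bar>X 0 \<omega> - \<mu>\<bar> \<ge> \<epsilon>} \<subseteq> {\<omega>\<in>space M. c1 + d1 * X 0 \<omega> \<ge> 0} \<union> {\<omega>\<in>space M. c2 + d2 * X 0 \<omega> \<ge> 0}"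
      unfolding c1_def d1_def c2_def d2_def by auto
    hence "prob {\<omega> \<in> space M. \<bar>X 0 \<omega> - \<mu>\<bar> \<ge> \<epsilon>} \<le> prob ({\<omega>\<in>space M. c1 + d1 * X 0 \<omega> \<ge> 0} \<union> {\<omega>\<in>space M. c2 + d2 * X 0 \<omega> \<ge> 0})"
      by (intro finite_measure_mono) auto
    also have "\<dots> \<le> q1 + q2" unfolding q1_def q2_def by (intro measure_Un_le) auto
    finally show ?thesis using pos by linarith
  qed
  define R where "R = max F G"
  have R0: "R > 0" unfolding R_def using qF qG q10 qpos by linarith
  have R1: "R < 1" unfolding R_def using F1 G1 by simp
  have F0: "F \<ge> 0" "G \<ge> 0" using qF qG q10 by linarith+
  define P where "P n = prob {\<omega>\<in>space M. \<not> \<bar>sample_mean X n \<omega> - \<mu>\<bar> < \<epsilon>}" for n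
  have Pset: "{\<omega>\<in>space M. \<not> \<bar>sample_mean X n \<omega> - \<mu>\<bar> < \<epsilon>} =
      {\<omega>\<in>space M. (\<Sum>i<n. c1 + d1 * X i \<omega>) \<ge> 0} \<union> {\<omega>\<in>space M. (\<Sum>i<n. c2 + d2 * X i \<omega>) \<ge> 0}"
    if n: "n \<ge> 1" for n
  proof -
    have n0: "real n > 0" using n by simp
    have "(\<not> \<bar>(\<Sum>i<n. X i \<omega>) / real n - \<mu>\<bar> < \<epsilon>) \<longleftrightarrow>
         ((\<Sum>i<n. X i \<omega>) \<le> real n * (\<mu> - \<epsilon>) \<or> (\<Sum>i<n. X i \<omega>) \<ge> real n * (\<mu> + \<epsilon>))" for \<omega>
    proof -
      have "(\<not> \<bar>(\<Sum>i<n. X i \<omega>) / real n - \<mu>\<bar> < \<epsilon>) \<longleftrightarrow>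
          ((\<Sum>i<n. X i \<omega>) / real n \<le> \<mu> - \<epsilon> \<or> (\<Sum>i<n. X i \<omega>) / real n \<ge> \<mu> + \<epsilon>)" by auto
      also have "\<dots> \<longleftrightarrow> ((\<Sum>i<n. X i \<omega>) \<le> real n * (\<mu> - \<epsilon>) \<or> (\<Sum>i<n. X i \<omega>) \<ge> real n * (\<mu> + \<epsilon>))"
        using n0 by (simp add: pos_divide_le_eq pos_le_divide_eq mult.commute)
      finally show ?thesis .
    qed
    thus ?thesis unfolding sample_mean_def sum_lin c1_def d1_def c2_def d2_def by (auto simp: algebra_simps)
  qed
  have Pmeas: "{\<omega>\<in>space M. (\<Sum>i<n. c + d * X i \<omega>) \<ge> 0} \<in> events" for c d n by measurable
  have Pup: "P n \<le> 2 * R^n" if "n \<ge> 1" for n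
  proof -
    have "P n \<le> Pn c1 d1 n + Pn c2 d2 n" unfolding P_def Pset[OF that] Pn_def by (intro measure_Un_le Pmeas)
    also have "\<dots> \<le> F^n + G^n" unfolding F_def G_def by (intro add_mono Pn_upper)
    also have "\<dots> \<le> R^n + R^n" unfolding R_def using F0 by (intro add_mono power_mono) auto
    finally show ?thesis by simp
  qed
  have Plow: "Pn c1 d1 n \<le> P n" "Pn c2 d2 n \<le> P n" if "n \<ge> 1" for n
    unfolding P_def Pset[OF that] Pn_def by (intro finite_measure_mono Pmeas sets.Un; blast)+
  have Qiff: "(n \<ge> 1 \<and> prob {\<omega> \<in> space M. \<bar>sample_mean X n \<omega> - \<mu>\<bar> < \<epsilon>} > 1 - \<delta>) \<longleftrightarrow> (n \<ge> 1 \<and> P n < \<delta>)" for n \<delta>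
  proof -
    have "{\<omega> \<in> space M. \<bar>sample_mean X n \<omega> - \<mu>\<bar> < \<epsilon>} = space M - {\<omega>\<in>space M. \<not> \<bar>sample_mean X n \<omega> - \<mu>\<bar> < \<epsilon>}" by auto
    moreover have "{\<omega>\<in>space M. \<not> \<bar>sample_mean X n \<omega> - \<mu>\<bar> < \<epsilon>} \<in> events" unfolding sample_mean_def by measurable
    ultimately have "prob {\<omega> \<in> space M. \<bar>sample_mean X n \<omega> - \<mu>\<bar> < \<epsilon>} = 1 - P n" unfolding P_def by (simp add: prob_compl)
    thus ?thesis by auto
  qed
  have Na_eq: "N_a M X \<mu> \<epsilon> \<delta> = (LEAST n. n \<ge> 1 \<and> P n < \<delta>)" for \<delta>
    unfolding N_a_def Qiff ..
  have up: "real (N_a M X \<mu> \<epsilon> \<delta>) \<le> ln (\<delta>/2) / ln R + 1 \<and> N_a M X \<mu> \<epsilon> \<delta> \<ge> 1 \<and> P (N_a M X \<mu> \<epsilon> \<delta>) < \<delta>"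
    if d: "0 < \<delta>" "\<delta> < 1" for \<delta>
  proof -
    define x where "x = ln (\<delta>/2) / ln R"
    have lnR: "ln R < 0" using R0 R1 by simp
    have x0: "x > 0" unfolding x_def using d lnR by (simp add: divide_neg_neg)
    define n1 where "n1 = nat \<lfloor>x\<rfloor> + 1"
    have n1x: "real n1 > x" "real n1 \<le> x + 1" unfolding n1_def using x0 by linarith+
    have n11: "n1 \<ge> 1" unfolding n1_def by simp
    have "real n1 * ln R < x * ln R" using n1x lnR by (intro mult_strict_right_mono_neg) auto
    also have "x * ln R = ln (\<delta>/2)" unfolding x_def using lnR by simp
    finally have "exp (real n1 * ln R) < exp (ln (\<delta>/2))" by simp
    hence "exp (real n1 * ln R) < \<delta>/2" using d by simp
    moreover have "exp (real n1 * ln R) = R ^ n1" using R0 by (simp add: exp_of_nat_mult)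
    ultimately have "R ^ n1 < \<delta>/2" by simp
    hence Q1: "n1 \<ge> 1 \<and> P n1 < \<delta>" using Pup[OF n11] n11 by simp
    have "N_a M X \<mu> \<epsilon> \<delta> \<le> n1" unfolding Na_eq by (rule Least_le[where P="\<lambda>n. n \<ge> 1 \<and> P n < \<delta>", OF Q1])
    moreover have "N_a M X \<mu> \<epsilon> \<delta> \<ge> 1 \<and> P (N_a M X \<mu> \<epsilon> \<delta>) < \<delta>" unfolding Na_eq by (rule LeastI[where P="\<lambda>n. n \<ge> 1 \<and> P n < \<delta>", OF Q1])
    ultimately show ?thesis using n1x unfolding x_def by simp
  qed
  have low: "\<exists>\<delta>1>0. \<forall>\<delta>. 0 < \<delta> \<longrightarrow> \<delta> < \<delta>1 \<longrightarrow> real (N_a M X \<mu> \<epsilon> \<delta>) \<ge> ln \<delta> / ln (R - \<eta>)"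
    if eta: "0 < \<eta>" "\<eta> < R" for \<eta>
  proof -
    have ev: "eventually (\<lambda>n. (R - \<eta>)^n \<le> P n) sequentially"
    proof (cases "F \<ge> G")
      case True
      hence RF: "R = F" unfolding R_def by simp
      have "eventually (\<lambda>n. (Fv c1 d1 - \<eta>)^n \<le> Pn c1 d1 n) sequentially"
        using Pn_lower[OF neg1 eta(1)] eta RF unfolding F_def by simp
      moreover have "eventually (\<lambda>n. n \<ge> 1) sequentially" by (rule eventually_ge_at_top)
      ultimately show ?thesis
      proof eventually_elim
        case (elim n) thus ?case using Plow(1)[of n] RF unfolding F_def by simp
      qed
    next
      case False
      hence RG: "R = G" unfolding R_def by simp
      have "eventually (\<lambda>n. (Fv c2 d2 - \<eta>)^n \<le> Pn c2 d2 n) sequentially"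
        using Pn_lower[OF neg2 eta(1)] eta RG unfolding G_def by simp
      moreover have "eventually (\<lambda>n. n \<ge> 1) sequentially" by (rule eventually_ge_at_top)
      ultimately show ?thesis
      proof eventually_elim
        case (elim n) thus ?case using Plow(2)[of n] RG unfolding G_def by simp
      qed
    qed
    then obtain n0 where n0: "\<And>n. n \<ge> n0 \<Longrightarrow> (R - \<eta>)^n \<le> P n" unfolding eventually_sequentially by blast
    define qq where "qq = max q1 q2"
    have qq0: "qq > 0" unfolding qq_def using qpos q10 by linarith
    have qq1: "qq \<le> 1" unfolding qq_def q1_def q2_def by simp
    have Pq: "qq ^ n \<le> P n" if "n \<ge> 1" for n
    proof (cases "q1 \<ge> q2")
      case True thus ?thesis using Pn_lower_q[of c1 d1 n] Plow(1)[OF that] unfolding qq_def q1_def by simp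
    next
      case False thus ?thesis using Pn_lower_q[of c2 d2 n] Plow(2)[OF that] unfolding qq_def q2_def by simp
    qed
    define \<delta>1 where "\<delta>1 = qq ^ n0"
    have d10: "\<delta>1 > 0" unfolding \<delta>1_def using qq0 by simp
    have d11: "\<delta>1 \<le> 1" unfolding \<delta>1_def using qq0 qq1 by (simp add: power_le_one)
    show ?thesis
    proof (intro exI[of _ \<delta>1] conjI allI impI d10)
      fix \<delta> :: real assume dp: "0 < \<delta>" and dl: "\<delta> < \<delta>1"
      define N where "N = N_a M X \<mu> \<epsilon> \<delta>"
      have NQ: "N \<ge> 1" "P N < \<delta>" using up[OF dp] dl d11 unfolding N_def by auto
      have Nn0: "N \<ge> n0"
      proof (rule ccontr)
        assume "\<not> N \<ge> n0"
        hence "qq ^ n0 \<le> qq ^ N" using qq0 qq1 by (intro power_decreasing) auto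
        thus False using Pq[OF NQ(1)] NQ(2) dl unfolding \<delta>1_def by linarith
      qed
      have "(R - \<eta>) ^ N < \<delta>" using n0[OF Nn0] NQ(2) by linarith
      hence "ln ((R - \<eta>) ^ N) < ln \<delta>" using eta dp by (subst ln_less_cancel_iff) auto
      hence "real N * ln (R - \<eta>) < ln \<delta>" using eta by (simp add: ln_realpow)
      moreover have "ln (R - \<eta>) < 0" using eta R1 by simp
      ultimately have "ln \<delta> / ln (R - \<eta>) < real N" by (simp add: divide_less_eq)
      thus "real (N_a M X \<mu> \<epsilon> \<delta>) \<ge> ln \<delta> / ln (R - \<eta>)" unfolding N_def by simp
    qed
  qed
  have Nc: "N_c M (X 0) \<mu> \<epsilon> \<delta> = ln (\<delta>/2) / ln R" if "0 < \<delta>" "\<delta> < 1" for \<delta>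
  proof -
    have L: "ln (\<delta>/2) < 0" using that by simp
    show ?thesis
    proof (cases "G \<le> F")
      case True
      thus ?thesis unfolding N_c_def hF hG R_def using max_ratio[OF L F0(2) True] qF q10 F1 R0 R_def
        by (simp add: max_def)
    next
      case False
      have "max (ln (\<delta>/2) / ln G) (ln (\<delta>/2) / ln F) = ln (\<delta>/2) / ln G"
        using False F0 G1 by (intro max_ratio[OF L]) auto
      thus ?thesis unfolding N_c_def hF hG R_def using False by (simp add: max.commute)
    qed
  qed
  show ?thesis
    by (rule final_pure[OF R0 R1 Nc]) (use up low in auto)
qed

end

theorem theorem8:
  fixes M :: "'a measure" and X :: "nat \<Rightarrow> 'a \<Rightarrow> real" and \<mu> \<epsilon> :: real
  assumes "prob_space M"
    and "prob_space.indep_vars M (\<lambda>_. borel) X UNIV"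
    and "\<And>i. distr M borel (X i) = distr M borel (X 0)"
    and "integrable M (X 0)"
    and "\<mu> = integral\<^sup>L M (X 0)"
    and "\<And>t::real. integrable M (\<lambda>\<omega>. exp (t * X 0 \<omega>))"
    and "\<epsilon> > 0"
    and "measure M {\<omega> \<in> space M. \<bar>X 0 \<omega> - \<mu>\<bar> \<ge> \<epsilon>} > 0"
  shows "((\<lambda>\<delta>. N_c M (X 0) \<mu> \<epsilon> \<delta> / real (N_a M X \<mu> \<epsilon> \<delta>)) \<longlongrightarrow> 1) (at_right 0)"
proof -
  interpret I: iid M X
    by (rule iid.intro[OF assms(1)], unfold_locales) (use assms in auto)
  show ?thesis by (rule I.main[OF assms(5,7,8)])
qed

end
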